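(* Let $(\mathfrak{g},[\cdot,\cdot]_{\mathfrak{g}})$ be a Leibniz algebra over a field $\mathbf{K}$, $(V;\rho^L,\rho^R)$ a representation, and $T:V\to\mathfrak{g}$ a relative Rota-Baxter operator. If $\mathcal{H}^2(V,\mathfrak{g})=0$, then every $\mathfrak{T}_1\in\mathcal{Z}^1(V,\mathfrak{g})$ is the infinitesimal of some formal deformation of $T$, i.e. there exist $\mathfrak{T}_i\in\mathrm{Hom}(V,\mathfrak{g})$, $i\ge2$, such that $T+\mathfrak{T}_1t+\sum_{i\ge2}\mathfrak{T}_it^i$ is a formal deformation of $T$.
   Context: A Leibniz algebra is a vector space $\mathfrak{g}$ with bilinear $[\cdot,\cdot]_{\mathfrak{g}}$ satisfying $[x,[y,z]_{\mathfrak{g}}]_{\mathfrak{g}}=[[x,y]_{\mathfrak{g}},z]_{\mathfrak{g}}+[y,[x,z]_{\mathfrak{g}}]_{\mathfrak{g}}$. A representation $(V;\rho^L,\rho^R)$: linear $\rho^L,\rho^R:\mathfrak{g}\to\mathfrak{gl}(V)$ with $\rho^L([x,y]_{\mathfrak{g}})=[\rho^L(x),\rho^L(y)]$, $\rho^R([x,y]_{\mathfrak{g}})=[\rho^L(x),\rho^R(y)]$, $\rho^R(y)\rho^L(x)=-\rho^R(y)\rho^R(x)$. A relative Rota-Baxter operator is a linear $T:V\to\mathfrak{g}$ with $[Tv_1,Tv_2]_{\mathfrak{g}}=T(\rho^L(Tv_1)v_2+\rho^R(Tv_2)v_1)$. Cohomology of $T$: $C^n(V,\mathfrak{g})=\mathrm{Hom}(\otimes^nV,\mathfrak{g})$,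 $C^0=\mathfrak{g}$, $\partial_T:C^n\to C^{n+1}$, $(\partial_Tf)(v_1,\dots,v_{n+1})=\sum_{i=1}^n(-1)^{i+1}[Tv_i,f(v_1,\dots,\hat v_i,\dots,v_{n+1})]_{\mathfrak{g}}-\sum_{i=1}^n(-1)^{i+1}T\rho^R(f(v_1,\dots,\hat v_i,\dots,v_{n+1}))v_i+(-1)^{n+1}[f(v_1,\dots,v_n),Tv_{n+1}]_{\mathfrak{g}}+(-1)^nT\rho^L(f(v_1,\dots,v_n))v_{n+1}+\sum_{1\le i<j\le n+1}(-1)^if(v_1,\dots,\hat v_i,\dots,v_{j-1},\rho^L(Tv_i)v_j+\rho^R(Tv_j)v_i,v_{j+1},\dots,v_{n+1})$; $\mathcal{Z}^k=\ker\partial_T\cap C^k$, $\mathcal{B}^k=\partial_T(C^{k-1})$, $\mathcal{H}^k=\mathcal{Z}^k/\mathcal{B}^k$. A formal deformation of $T$ is $T_t=\sum_{i\ge0}\mathfrak{T}_it^i$, $\mathfrak{T}_i\in\mathrm{Hom}(V,\mathfrak{g})$, $\mathfrak{T}_0=T$, extended $\mathbf{K}[[t]]$-linearly $V[[t]]\to\mathfrak{g}[[t]]$ (bracket and $\rho^L,\rho^R$ extended $\mathbf{K}[[t]]$-bilinearly), with $[T_t(u),T_t(v)]_{\mathfrak{g}}=T_t(\rho^L(T_t(u))v+\rho^R(T_t(v))u)$ for $u,v\in V$; its infinitesimal is $\mathfrak{T}_1$. *)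

theory Defs
  imports Complex_Main
begin

definition bilinear_map ::
  "('k::field \<Rightarrow> 'a::ab_group_add \<Rightarrow> 'a) \<Rightarrow> ('k \<Rightarrow> 'b::ab_group_add \<Rightarrow> 'b) \<Rightarrow>
   ('k \<Rightarrow> 'c::ab_group_add \<Rightarrow> 'c) \<Rightarrow> ('a \<Rightarrow> 'b \<Rightarrow> 'c) \<Rightarrow> bool" where
  "bilinear_map sa sb sc f \<longleftrightarrow>
     (\<forall>x. Vector_Spaces.linear sb sc (f x)) \<and> (\<forall>y. Vector_Spaces.linear sa sc (\<lambda>x. f x y))"

definition leibniz_algebra ::
  "('k::field \<Rightarrow> 'g::ab_group_add \<Rightarrow> 'g) \<Rightarrow> ('g \<Rightarrow> 'g \<Rightarrow> 'g) \<Rightarrow> bool" where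
  "leibniz_algebra sg br \<longleftrightarrow>
     vector_space sg \<and> bilinear_map sg sg sg br \<and>
     (\<forall>x y z. br x (br y z) = br (br x y) z + br y (br x z))"

definition leibniz_rep ::
  "('k::field \<Rightarrow> 'g::ab_group_add \<Rightarrow> 'g) \<Rightarrow> ('g \<Rightarrow> 'g \<Rightarrow> 'g) \<Rightarrow>
   ('k \<Rightarrow> 'v::ab_group_add \<Rightarrow> 'v) \<Rightarrow> ('g \<Rightarrow> 'v \<Rightarrow> 'v) \<Rightarrow> ('g \<Rightarrow> 'v \<Rightarrow> 'v) \<Rightarrow> bool" where
  "leibniz_rep sg br sv rL rR \<longleftrightarrow>
     vector_space sv \<and> bilinear_map sg sv sv rL \<and> bilinear_map sg sv sv rR \<and>
     (\<forall>x y v. rL (br x y) v = rL x (rL y v) - rL y (rL x v)) \<and>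
     (\<forall>x y v. rR (br x y) v = rL x (rR y v) - rR y (rL x v)) \<and>
     (\<forall>x y v. rR y (rL x v) = - rR y (rR x v))"

definition relative_RB ::
  "('k::field \<Rightarrow> 'g::ab_group_add \<Rightarrow> 'g) \<Rightarrow> ('g \<Rightarrow> 'g \<Rightarrow> 'g) \<Rightarrow>
   ('k \<Rightarrow> 'v::ab_group_add \<Rightarrow> 'v) \<Rightarrow> ('g \<Rightarrow> 'v \<Rightarrow> 'v) \<Rightarrow> ('g \<Rightarrow> 'v \<Rightarrow> 'v) \<Rightarrow>
   ('v \<Rightarrow> 'g) \<Rightarrow> bool" where
  "relative_RB sg br sv rL rR T \<longleftrightarrow>
     Vector_Spaces.linear sv sg T \<and>
     (\<forall>u v. br (T u) (T v) = T (rL (T u) v + rR (T v) u))"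

text \<open>n-cochains: elements of Hom(V^{\<otimes>n}, g), represented as functions on lists
  of vectors that are multilinear on lists of length n (values on lists of other
  lengths are irrelevant).\<close>

definition cochain ::
  "('k::field \<Rightarrow> 'g::ab_group_add \<Rightarrow> 'g) \<Rightarrow> ('k \<Rightarrow> 'v::ab_group_add \<Rightarrow> 'v) \<Rightarrow>
   nat \<Rightarrow> ('v list \<Rightarrow> 'g) \<Rightarrow> bool" where
  "cochain sg sv n f \<longleftrightarrow>
     (\<forall>vs i. length vs = n \<and> i < n \<longrightarrow> Vector_Spaces.linear sv sg (\<lambda>v. f (vs[i := v])))"

definition alt :: "nat \<Rightarrow> 'a::ab_group_add \<Rightarrow> 'a" where
  "alt i x = (if even i then x else - x)"

definition remove_nth :: "nat \<Rightarrow> 'a list \<Rightarrow> 'a list" where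
  "remove_nth i xs = take i xs @ drop (Suc i) xs"

text \<open>The coboundary operator of T, applied to an n-cochain f and a list vs of
  length n+1 (0-based indices; the 1-based index i of the paper is i+1 here).\<close>

definition dT ::
  "('g::ab_group_add \<Rightarrow> 'g \<Rightarrow> 'g) \<Rightarrow> ('g \<Rightarrow> 'v::ab_group_add \<Rightarrow> 'v) \<Rightarrow> ('g \<Rightarrow> 'v \<Rightarrow> 'v) \<Rightarrow>
   ('v \<Rightarrow> 'g) \<Rightarrow> nat \<Rightarrow> ('v list \<Rightarrow> 'g) \<Rightarrow> 'v list \<Rightarrow> 'g" where
  "dT br rL rR T n f vs =
     (\<Sum>i<n. alt i (br (T (vs ! i)) (f (remove_nth i vs))))
   - (\<Sum>i<n. alt i (T (rR (f (remove_nth i vs)) (vs ! i))))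
   + alt (n + 1) (br (f (take n vs)) (T (vs ! n)))
   + alt n (T (rL (f (take n vs)) (vs ! n)))
   + (\<Sum>j\<le>n. \<Sum>i<j. alt (i + 1)
        (f ((remove_nth i vs)[j - 1 := rL (T (vs ! i)) (vs ! j) + rR (T (vs ! j)) (vs ! i)])))"

definition cocycle where
  "cocycle sg sv br rL rR T n f \<longleftrightarrow>
     cochain sg sv n f \<and> (\<forall>vs. length vs = Suc n \<longrightarrow> dT br rL rR T n f vs = 0)"

definition coboundary where
  "coboundary sg sv br rL rR T n f \<longleftrightarrow>
     cochain sg sv n f \<and>
     (\<exists>h. cochain sg sv (n - 1) h \<and> (\<forall>vs. length vs = n \<longrightarrow> f vs = dT br rL rR T (n - 1) h vs))"

definition cohomology_vanishes where
  "cohomology_vanishes sg sv br rL rR T n \<longleftrightarrow>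
     (\<forall>f. cocycle sg sv br rL rR T n f \<longrightarrow> coboundary sg sv br rL rR T n f)"

text \<open>Formal deformation T_t = \<Sum> Tt i t^i: the K[[t]]-bilinear identity, compared
  coefficient-wise in t^n.\<close>

definition formal_deformation ::
  "('k::field \<Rightarrow> 'g::ab_group_add \<Rightarrow> 'g) \<Rightarrow> ('g \<Rightarrow> 'g \<Rightarrow> 'g) \<Rightarrow>
   ('k \<Rightarrow> 'v::ab_group_add \<Rightarrow> 'v) \<Rightarrow> ('g \<Rightarrow> 'v \<Rightarrow> 'v) \<Rightarrow> ('g \<Rightarrow> 'v \<Rightarrow> 'v) \<Rightarrow>
   ('v \<Rightarrow> 'g) \<Rightarrow> (nat \<Rightarrow> 'v \<Rightarrow> 'g) \<Rightarrow> bool" where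
  "formal_deformation sg br sv rL rR T Tt \<longleftrightarrow>
     Tt 0 = T \<and> (\<forall>i. Vector_Spaces.linear sv sg (Tt i)) \<and>
     (\<forall>n u v. (\<Sum>i\<le>n. br (Tt i u) (Tt (n - i) v))
              = (\<Sum>i\<le>n. Tt i (rL (Tt (n - i) u) v + rR (Tt (n - i) v) u)))"

end

theory Submission
  imports Defs
begin



definition S3 :: "nat \<Rightarrow> (nat \<Rightarrow> nat \<Rightarrow> nat \<Rightarrow> 'a::comm_monoid_add) \<Rightarrow> 'a" where
  "S3 N f = (\<Sum>(a,b,c)\<in>{(a,b,c). a+b+c=N}. f a b c)"

lemma S3_fin: "finite {(a,b,c). a+b+c=(N::nat)}"
proof -
  have "{(a,b,c). a+b+c=N} \<subseteq> {..N} \<times> {..N} \<times> {..N}" by auto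
  then show ?thesis by (rule finite_subset) auto
qed

lemma tri1: "(\<Sum>a\<le>N. \<Sum>i\<le>N-a. f a i (N-a-i)) = S3 N f"
proof -
  have "(\<Sum>a\<le>N. \<Sum>i\<le>N-a. f a i (N-a-i)) = (\<Sum>(a,i)\<in>Sigma {..N} (\<lambda>a. {..N-a}). f a i (N-a-i))"
    by (rule sum.Sigma) auto
  also have "\<dots> = S3 N f" unfolding S3_def
    by (rule sum.reindex_bij_witness[where i="\<lambda>(a,b,c). (a,b)" and j="\<lambda>(a,i). (a,i,N-a-i)"]) auto
  finally show ?thesis .
qed

lemma tri2: "(\<Sum>a\<le>N. \<Sum>i\<le>a. f i (a-i) (N-a)) = S3 N f"
proof -
  have "(\<Sum>a\<le>N. \<Sum>i\<le>a. f i (a-i) (N-a)) = (\<Sum>(a,i)\<in>Sigma {..N} (\<lambda>a. {..a}). f i (a-i) (N-a))"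
    by (rule sum.Sigma) auto
  also have "\<dots> = S3 N f" unfolding S3_def
    by (rule sum.reindex_bij_witness[where i="\<lambda>(a,b,c). (a+b,a)" and j="\<lambda>(a,i). (i,a-i,N-a)"]) auto
  finally show ?thesis .
qed

lemma perm12: "S3 N f = S3 N (\<lambda>a b c. f b a c)" unfolding S3_def
  by (rule sum.reindex_bij_witness[where i="\<lambda>(a,b,c). (b,a,c)" and j="\<lambda>(a,b,c). (b,a,c)"]) auto

lemma perm23: "S3 N f = S3 N (\<lambda>a b c. f a c b)" unfolding S3_def
  by (rule sum.reindex_bij_witness[where i="\<lambda>(a,b,c). (a,c,b)" and j="\<lambda>(a,b,c). (a,c,b)"]) auto

lemma S3_add: "S3 N (\<lambda>a b c. f a b c + g a b c) = S3 N f + S3 N g"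
  unfolding S3_def by (simp add: case_prod_unfold sum.distrib)

lemma S3_diff: "S3 N (\<lambda>a b c. f a b c - g a b c) = S3 N f - (S3 N g :: 'a::ab_group_add)"
  unfolding S3_def by (simp add: case_prod_unfold sum_subtractf)

lemma S3_cong: assumes "\<And>a b c. f a b c = g a b c" shows "S3 N f = S3 N g"
proof -
  have "f = g" using assms by (intro ext)
  then show ?thesis by simp
qed

definition circT :: "('g \<Rightarrow> 'v \<Rightarrow> 'v::plus) \<Rightarrow> ('g \<Rightarrow> 'v \<Rightarrow> 'v) \<Rightarrow> (nat \<Rightarrow> 'v \<Rightarrow> 'g) \<Rightarrow> nat \<Rightarrow> 'v \<Rightarrow> 'v \<Rightarrow> 'v" where
  "circT rL rR Tt m x y = rL (Tt m x) y + rR (Tt m y) x"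

definition phiT :: "('g::ab_group_add \<Rightarrow> 'g \<Rightarrow> 'g) \<Rightarrow> ('g \<Rightarrow> 'v \<Rightarrow> 'v::plus) \<Rightarrow> ('g \<Rightarrow> 'v \<Rightarrow> 'v) \<Rightarrow> (nat \<Rightarrow> 'v \<Rightarrow> 'g) \<Rightarrow> nat \<Rightarrow> nat \<Rightarrow> 'v \<Rightarrow> 'v \<Rightarrow> 'g" where
  "phiT br rL rR Tt i j x y = br (Tt i x) (Tt j y) - Tt i (circT rL rR Tt j x y)"

definition PhiT :: "('g::ab_group_add \<Rightarrow> 'g \<Rightarrow> 'g) \<Rightarrow> ('g \<Rightarrow> 'v \<Rightarrow> 'v::plus) \<Rightarrow> ('g \<Rightarrow> 'v \<Rightarrow> 'v) \<Rightarrow> (nat \<Rightarrow> 'v \<Rightarrow> 'g) \<Rightarrow> nat \<Rightarrow> 'v \<Rightarrow> 'v \<Rightarrow> 'g" where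
  "PhiT br rL rR Tt m x y = (\<Sum>i\<le>m. phiT br rL rR Tt i (m-i) x y)"

locale lalg =
  fixes br :: "'g::ab_group_add \<Rightarrow> 'g \<Rightarrow> 'g" and rL rR :: "'g \<Rightarrow> 'v::ab_group_add \<Rightarrow> 'v"
    and Tt :: "nat \<Rightarrow> 'v \<Rightarrow> 'g"
  assumes brL: "br (x+y) z = br x z + br y z" and brR: "br x (y+z) = br x y + br x z"
    and rLL: "rL (x+y) v = rL x v + rL y v" and rLR: "rL x (v+w) = rL x v + rL x w"
    and rRL: "rR (x+y) v = rR x v + rR y v" and rRR: "rR x (v+w) = rR x v + rR x w"
    and TtA: "Tt i (v+w) = Tt i v + Tt i w"
    and leib: "br x (br y z) = br (br x y) z + br y (br x z)"
    and rep1: "rL (br x y) v = rL x (rL y v) - rL y (rL x v)"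
    and rep2: "rR (br x y) v = rL x (rR y v) - rR y (rL x v)"
    and rep3: "rR y (rL x v) = - rR y (rR x v)"
begin

lemma addv:
  "additive (\<lambda>x. br x z)" "additive (br x)" "additive (\<lambda>x. rL x v)" "additive (rL x)"
  "additive (\<lambda>x. rR x v)" "additive (rR x)" "additive (Tt i)"
  by (simp_all add: additive_def brL brR rLL rLR rRL rRR TtA)

lemmas diffs = addv[THEN additive.diff] and minuss = addv[THEN additive.minus]
  and zeros = addv[THEN additive.zero] and sums = addv[THEN additive.sum]

lemmas alls = brL brR rLL rLR rRL rRR TtA diffs minuss zeros sums

abbreviation "Phi \<equiv> PhiT br rL rR Tt"
abbreviation "circ \<equiv> circT rL rR Tt"
abbreviation "phi \<equiv> phiT br rL rR Tt"

lemma G_S3: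
  "(\<Sum>a\<le>N. br (Tt a u) (Phi (N-a) v w)) - (\<Sum>a\<le>N. br (Tt a v) (Phi (N-a) u w))
   - (\<Sum>a\<le>N. br (Phi a u v) (Tt (N-a) w))
   - (\<Sum>a\<le>N. Tt a (rR (Phi (N-a) v w) u)) + (\<Sum>a\<le>N. Tt a (rR (Phi (N-a) u w) v))
   + (\<Sum>a\<le>N. Tt a (rL (Phi (N-a) u v) w))
   + (\<Sum>a\<le>N. Phi a u (circ (N-a) v w)) - (\<Sum>a\<le>N. Phi a (circ (N-a) u v) w)
   - (\<Sum>a\<le>N. Phi a v (circ (N-a) u w))
   = S3 N (\<lambda>a b c. br (Tt a u) (phi b c v w)) - S3 N (\<lambda>a b c. br (Tt a v) (phi b c u w))
     - S3 N (\<lambda>a b c. br (phi a b u v) (Tt c w))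
     - S3 N (\<lambda>a b c. Tt a (rR (phi b c v w) u)) + S3 N (\<lambda>a b c. Tt a (rR (phi b c u w) v))
     + S3 N (\<lambda>a b c. Tt a (rL (phi b c u v) w))
     + S3 N (\<lambda>a b c. phi a b u (circ c v w)) - S3 N (\<lambda>a b c. phi a b (circ c u v) w)
     - S3 N (\<lambda>a b c. phi a b v (circ c u w))"
proof -
  have e1: "\<And>u v w. (\<Sum>a\<le>N. br (Tt a u) (Phi (N-a) v w)) = S3 N (\<lambda>a b c. br (Tt a u) (phi b c v w))"
    by (simp add: PhiT_def sums tri1[symmetric])
  have e3: "(\<Sum>a\<le>N. br (Phi a u v) (Tt (N-a) w)) = S3 N (\<lambda>a b c. br (phi a b u v) (Tt c w))"
    by (simp add: PhiT_def sums tri2[symmetric])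
  have e4: "\<And>u v w. (\<Sum>a\<le>N. Tt a (rR (Phi (N-a) v w) u)) = S3 N (\<lambda>a b c. Tt a (rR (phi b c v w) u))"
    by (simp add: PhiT_def sums tri1[symmetric])
  have e6: "(\<Sum>a\<le>N. Tt a (rL (Phi (N-a) u v) w)) = S3 N (\<lambda>a b c. Tt a (rL (phi b c u v) w))"
    by (simp add: PhiT_def sums tri1[symmetric])
  have e7: "\<And>u v w. (\<Sum>a\<le>N. Phi a u (circ (N-a) v w)) = S3 N (\<lambda>a b c. phi a b u (circ c v w))"
    by (simp add: PhiT_def sums tri2[symmetric])
  have e8: "(\<Sum>a\<le>N. Phi a (circ (N-a) u v) w) = S3 N (\<lambda>a b c. phi a b (circ c u v) w)"
    by (simp add: PhiT_def sums tri2[symmetric])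
  show ?thesis by (simp only: e1 e3 e4 e6 e7 e8)
qed

definition "KK u v w a b c = br (Tt a (circ b u v)) (Tt c w) + Tt a (rL (Tt b v) (rL (Tt c u) w))
   + Tt a (rR (Tt b w) (rL (Tt c u) v)) - Tt a (rR (Tt b w) (rL (Tt c v) u))"
definition "LL u v w a b c = - br (Tt a v) (br (Tt b u) (Tt c w))"

lemma termwise:
  "br (Tt a u) (phi b c v w) - br (Tt a v) (phi b c u w)
     - br (phi a b u v) (Tt c w)
     - Tt a (rR (phi b c v w) u) + Tt a (rR (phi b c u w) v)
     + Tt a (rL (phi b c u v) w)
     + phi a b u (circ c v w) - phi a b (circ c u v) w
     - phi a b v (circ c u w)
   = KK u v w a b c - KK u v w a c b + LL u v w a b c - LL u v w b a c"
  unfolding KK_def LL_def phiT_def circT_def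
  by (simp add: alls rep1 rep2 rep3 leib[of "Tt a u" "Tt b v" "Tt c w"] algebra_simps)

lemma G_zero:
  "(\<Sum>a\<le>N. br (Tt a u) (Phi (N-a) v w)) - (\<Sum>a\<le>N. br (Tt a v) (Phi (N-a) u w))
   - (\<Sum>a\<le>N. br (Phi a u v) (Tt (N-a) w))
   - (\<Sum>a\<le>N. Tt a (rR (Phi (N-a) v w) u)) + (\<Sum>a\<le>N. Tt a (rR (Phi (N-a) u w) v))
   + (\<Sum>a\<le>N. Tt a (rL (Phi (N-a) u v) w))
   + (\<Sum>a\<le>N. Phi a u (circ (N-a) v w)) - (\<Sum>a\<le>N. Phi a (circ (N-a) u v) w)
   - (\<Sum>a\<le>N. Phi a v (circ (N-a) u w)) = 0"
proof -
  have fa: "S3 N f + S3 N g = S3 N (\<lambda>a b c. f a b c + g a b c)" for f g :: "nat \<Rightarrow> nat \<Rightarrow> nat \<Rightarrow> 'g"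
    by (rule S3_add[symmetric])
  have fd: "S3 N f - S3 N g = S3 N (\<lambda>a b c. f a b c - g a b c)" for f g :: "nat \<Rightarrow> nat \<Rightarrow> nat \<Rightarrow> 'g"
    by (rule S3_diff[symmetric])
  have "S3 N (\<lambda>a b c. KK u v w a b c - KK u v w a c b + LL u v w a b c - LL u v w b a c) = 0"
    by (simp only: S3_add S3_diff perm23[of N "KK u v w", symmetric] perm12[of N "LL u v w", symmetric]) simp
  then show ?thesis unfolding G_S3
    by (simp only: fa fd termwise)
qed

lemma sum_at0: "(\<And>a. a \<le> (N::nat) \<Longrightarrow> a \<noteq> 0 \<Longrightarrow> f a = 0) \<Longrightarrow> (\<Sum>a\<le>N. f a) = (f 0 :: 'a::comm_monoid_add)"
proof -
  assume h: "\<And>a. a \<le> N \<Longrightarrow> a \<noteq> 0 \<Longrightarrow> f a = 0"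
  have "(\<Sum>a\<le>N. f a) = f 0 + (\<Sum>a\<in>{..N}-{0}. f a)" by (rule sum.remove) auto
  also have "(\<Sum>a\<in>{..N}-{0}. f a) = 0" by (rule sum.neutral) (auto simp: h)
  finally show ?thesis by simp
qed

lemma sum_atN: "(\<And>a. a < (N::nat) \<Longrightarrow> f a = 0) \<Longrightarrow> (\<Sum>a\<le>N. f a) = (f N :: 'a::comm_monoid_add)"
proof -
  assume h: "\<And>a. a < N \<Longrightarrow> f a = 0"
  have "(\<Sum>a\<le>N. f a) = f N + (\<Sum>a\<in>{..N}-{N}. f a)" by (rule sum.remove) auto
  also have "(\<Sum>a\<in>{..N}-{N}. f a) = 0" by (rule sum.neutral) (auto simp: h le_less)
  finally show ?thesis by simp
qed

lemma bianchi:
  assumes H: "\<And>m x y. m < N \<Longrightarrow> Phi m x y = 0"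
  shows "br (Tt 0 u) (Phi N v w) - br (Tt 0 v) (Phi N u w) - br (Phi N u v) (Tt 0 w)
     - Tt 0 (rR (Phi N v w) u) + Tt 0 (rR (Phi N u w) v) + Tt 0 (rL (Phi N u v) w)
     + Phi N u (circ 0 v w) - Phi N (circ 0 u v) w - Phi N v (circ 0 u w) = 0"
proof -
  have "\<And>a x y. a \<le> N \<Longrightarrow> a \<noteq> 0 \<Longrightarrow> Phi (N-a) x y = 0" by (rule H) auto
  note Z = this
  have s1: "\<And>u v w. (\<Sum>a\<le>N. br (Tt a u) (Phi (N-a) v w)) = br (Tt 0 u) (Phi N v w)"
    by (subst sum_at0) (simp_all add: Z zeros)
  have s4: "\<And>u v w. (\<Sum>a\<le>N. Tt a (rR (Phi (N-a) v w) u)) = Tt 0 (rR (Phi N v w) u)"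
    by (subst sum_at0) (simp_all add: Z zeros)
  have s6: "\<And>u v w. (\<Sum>a\<le>N. Tt a (rL (Phi (N-a) v w) u)) = Tt 0 (rL (Phi N v w) u)"
    by (subst sum_at0) (simp_all add: Z zeros)
  have s3: "(\<Sum>a\<le>N. br (Phi a u v) (Tt (N-a) w)) = br (Phi N u v) (Tt 0 w)"
    by (subst sum_atN) (simp_all add: H zeros)
  have s7: "\<And>x y. (\<Sum>a\<le>N. Phi a x (y a)) = Phi N x (y N)"
    by (subst sum_atN) (simp_all add: H)
  have s8: "\<And>x y. (\<Sum>a\<le>N. Phi a (x a) y) = Phi N (x N) y"
    by (subst sum_atN) (simp_all add: H)
  show ?thesis using G_zero[where N=N and u=u and v=v and w=w]
    by (simp only: s1 s3 s4 s6 s7 s8 diff_self) simp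
qed

end




lemma lin_add: "Vector_Spaces.linear s1 s2 f \<Longrightarrow> Vector_Spaces.linear s1 s2 g \<Longrightarrow> Vector_Spaces.linear s1 s2 (\<lambda>x. f x + g x)"
  unfolding Vector_Spaces.linear_iff by (auto simp: vector_space.vector_space_assms(1) algebra_simps)

lemma lin_neg: "Vector_Spaces.linear s1 s2 f \<Longrightarrow> Vector_Spaces.linear s1 s2 (\<lambda>x. - f x)"
  unfolding Vector_Spaces.linear_iff by (auto simp: module.scale_minus_right module_iff_vector_space)

lemma lin_diff: "Vector_Spaces.linear s1 s2 f \<Longrightarrow> Vector_Spaces.linear s1 s2 g \<Longrightarrow> Vector_Spaces.linear s1 s2 (\<lambda>x. f x - g x)"
  using lin_add[of s1 s2 f "\<lambda>x. - g x"] lin_neg[of s1 s2 g] by simp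

lemma lin_zero: "vector_space s1 \<Longrightarrow> vector_space s2 \<Longrightarrow> Vector_Spaces.linear s1 s2 (\<lambda>x. 0)"
  unfolding Vector_Spaces.linear_iff by (auto simp: module.scale_zero_right module_iff_vector_space)

lemma lin_sum: "finite I \<Longrightarrow> vector_space s1 \<Longrightarrow> vector_space s2 \<Longrightarrow> (\<And>i. i \<in> I \<Longrightarrow> Vector_Spaces.linear s1 s2 (f i))
  \<Longrightarrow> Vector_Spaces.linear s1 s2 (\<lambda>x. \<Sum>i\<in>I. f i x)"
  by (induction I rule: finite_induct) (auto intro: lin_zero lin_add)

lemma lin_comp: "Vector_Spaces.linear s1 s2 f \<Longrightarrow> Vector_Spaces.linear s2 s3 g \<Longrightarrow> Vector_Spaces.linear s1 s3 (\<lambda>x. g (f x))"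
  using Vector_Spaces.linear_compose[of s1 s2 f s3 g] by (simp add: o_def)

lemma lin_vs1: "Vector_Spaces.linear s1 s2 f \<Longrightarrow> vector_space s1" by (simp add: Vector_Spaces.linear_iff)
lemma lin_vs2: "Vector_Spaces.linear s1 s2 f \<Longrightarrow> vector_space s2" by (simp add: Vector_Spaces.linear_iff)
lemma lin_addD: "Vector_Spaces.linear s1 s2 f \<Longrightarrow> f (x + y) = f x + f y" by (simp add: Vector_Spaces.linear_iff)




lemma dT1: "dT br rL rR T 1 h [x,y] = br (T x) (h [y]) - T (rR (h [y]) x) + br (h [x]) (T y) - T (rL (h [x]) y) - h [rL (T x) y + rR (T y) x]"
  by (simp add: dT_def alt_def remove_nth_def)

lemma dT2: "dT br rL rR T 2 f [x,y,z] = br (T x) (f [y,z]) - br (T y) (f [x,z]) - T (rR (f [y,z]) x) + T (rR (f [x,z]) y)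
   - br (f [x,y]) (T z) + T (rL (f [x,y]) z) - f [rL (T x) y + rR (T y) x, z] - f [y, rL (T x) z + rR (T z) x]
   + f [x, rL (T y) z + rR (T z) y]"
proof -
  have h3: "\<not> Suc (Suc 0) dvd Suc (Suc (Suc 0))" by presburger
  show ?thesis
    by (simp add: dT_def alt_def remove_nth_def numeral_2_eq_2 lessThan_Suc atMost_Suc h3 algebra_simps)
qed



lemma lalg_intro:
  assumes la: "leibniz_algebra sg br" and rp: "leibniz_rep sg br sv rL rR"
    and TT: "\<And>i. Vector_Spaces.linear sv sg (Tt i)"
  shows "lalg br rL rR Tt"
proof -
  from la have BL: "\<And>c. Vector_Spaces.linear sg sg (\<lambda>z. br z c)" and BR: "\<And>c. Vector_Spaces.linear sg sg (br c)"
    and lei: "\<And>x y z. br x (br y z) = br (br x y) z + br y (br x z)"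
    unfolding leibniz_algebra_def bilinear_map_def by blast+
  from rp have LL: "\<And>c. Vector_Spaces.linear sg sv (\<lambda>z. rL z c)" and LR: "\<And>c. Vector_Spaces.linear sv sv (rL c)"
    and RL: "\<And>c. Vector_Spaces.linear sg sv (\<lambda>z. rR z c)" and RR: "\<And>c. Vector_Spaces.linear sv sv (rR c)"
    and r1: "\<And>x y v. rL (br x y) v = rL x (rL y v) - rL y (rL x v)"
    and r2: "\<And>x y v. rR (br x y) v = rL x (rR y v) - rR y (rL x v)"
    and r3: "\<And>x y v. rR y (rL x v) = - rR y (rR x v)"
    unfolding leibniz_rep_def bilinear_map_def by blast+
  show ?thesis
    by unfold_locales (rule lin_addD[OF BL] lin_addD[OF BR] lin_addD[OF LL] lin_addD[OF LR] lin_addD[OF RL] lin_addD[OF RR]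
      lin_addD[OF TT] lei r1 r2 r3)+
qed



lemma Phi_lin:
  assumes la: "leibniz_algebra sg br" and rp: "leibniz_rep sg br sv rL rR"
    and TT: "\<And>i. Vector_Spaces.linear sv sg (Tt i)"
  shows "Vector_Spaces.linear sv sg (\<lambda>x. PhiT br rL rR Tt N x y)"
    and "Vector_Spaces.linear sv sg (\<lambda>y. PhiT br rL rR Tt N x y)"
proof -
  from la have BL: "\<And>c. Vector_Spaces.linear sg sg (\<lambda>z. br z c)" and BR: "\<And>c. Vector_Spaces.linear sg sg (br c)"
    and VG: "vector_space sg"
    unfolding leibniz_algebra_def bilinear_map_def by blast+
  from rp have LL: "\<And>c. Vector_Spaces.linear sg sv (\<lambda>z. rL z c)" and LR: "\<And>c. Vector_Spaces.linear sv sv (rL c)"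
    and RL: "\<And>c. Vector_Spaces.linear sg sv (\<lambda>z. rR z c)" and RR: "\<And>c. Vector_Spaces.linear sv sv (rR c)"
    and VV: "vector_space sv"
    unfolding leibniz_rep_def bilinear_map_def by blast+
  show "Vector_Spaces.linear sv sg (\<lambda>x. PhiT br rL rR Tt N x y)"
    unfolding PhiT_def phiT_def circT_def
    by (intro lin_sum lin_diff lin_comp[OF TT BL] lin_comp[OF lin_add[OF lin_comp[OF TT LL] RR] TT] VV VG) auto
  show "Vector_Spaces.linear sv sg (\<lambda>y. PhiT br rL rR Tt N x y)"
    unfolding PhiT_def phiT_def circT_def
    by (intro lin_sum lin_diff lin_comp[OF TT BR] lin_comp[OF lin_add[OF LR lin_comp[OF TT RL]] TT] VV VG) auto
qed

lemma sum_split0N: "0 < (N::nat) \<Longrightarrow> (\<Sum>i\<le>N. g i) = g 0 + g N + (\<Sum>i\<in>{0<..<N}. g i)"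
proof -
  assume N: "0 < N"
  have "{..N} = insert 0 (insert N {0<..<N})" using N by auto
  then show ?thesis using N by (simp add: add.assoc)
qed

lemma PhiT_upd:
  assumes L: "lalg br rL rR F" and N: "0 < N" and FN: "\<And>z. F N z = 0"
  shows "PhiT br rL rR (F(N:=G)) N x y = PhiT br rL rR F N x y + br (F 0 x) (G y) + br (G x) (F 0 y)
     - F 0 (rL (G x) y + rR (G y) x) - G (rL (F 0 x) y + rR (F 0 y) x)"
proof -
  interpret lalg br rL rR F by fact
  have mid: "(\<Sum>i\<in>{0<..<N}. phiT br rL rR (F(N:=G)) i (N-i) x y) = (\<Sum>i\<in>{0<..<N}. phiT br rL rR F i (N-i) x y)"
    by (rule sum.cong) (auto simp: phiT_def circT_def)
  show ?thesis
    unfolding PhiT_def using N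
    by (simp add: sum_split0N mid) (simp add: phiT_def circT_def FN zeros algebra_simps)
qed

lemma PhiT_cong: "(\<And>i. i \<le> m \<Longrightarrow> F i = F' i) \<Longrightarrow> PhiT br rL rR F m x y = PhiT br rL rR F' m x y"
  unfolding PhiT_def phiT_def circT_def by (rule sum.cong) auto




primrec famr :: "((nat \<Rightarrow> 'v \<Rightarrow> 'g) \<Rightarrow> nat \<Rightarrow> 'v \<Rightarrow> 'g) \<Rightarrow> (nat \<Rightarrow> 'v \<Rightarrow> 'g) \<Rightarrow> nat \<Rightarrow> nat \<Rightarrow> 'v \<Rightarrow> 'g" where
  "famr c F0 0 = F0"
| "famr c F0 (Suc k) = (famr c F0 k)(Suc (Suc k) := c (famr c F0 k) k)"

lemma famr_stable: "i \<le> Suc k \<Longrightarrow> famr c F0 (k + d) i = famr c F0 k i"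
  by (induction d) auto

lemma len2: "length vs = 2 \<Longrightarrow> \<exists>a b. vs = [a,b]"
  by (cases vs; cases "tl vs") auto

lemma len3: "length vs = 3 \<Longrightarrow> \<exists>a b c. vs = [a,b,c]"
  by (cases vs; cases "tl vs"; cases "tl (tl vs)") auto

theorem corollary3p27:
  fixes sg :: "'k::field \<Rightarrow> 'g::ab_group_add \<Rightarrow> 'g"
    and sv :: "'k \<Rightarrow> 'v::ab_group_add \<Rightarrow> 'v"
    and br :: "'g \<Rightarrow> 'g \<Rightarrow> 'g"
    and rL rR :: "'g \<Rightarrow> 'v \<Rightarrow> 'v"
    and T T1 :: "'v \<Rightarrow> 'g"
  assumes "leibniz_algebra sg br"
    and "leibniz_rep sg br sv rL rR"
    and "relative_RB sg br sv rL rR T"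
    and "cohomology_vanishes sg sv br rL rR T 2"
    and "Vector_Spaces.linear sv sg T1"
    and "cocycle sg sv br rL rR T 1 (\<lambda>vs. T1 (hd vs))"
  shows "\<exists>Tt :: nat \<Rightarrow> 'v \<Rightarrow> 'g. formal_deformation sg br sv rL rR T Tt \<and> Tt 1 = T1"
proof -
  note la = assms(1) and rp = assms(2)
  have VG: "vector_space sg" using la unfolding leibniz_algebra_def by blast
  have VV: "vector_space sv" using rp unfolding leibniz_rep_def by blast
  have TL: "Vector_Spaces.linear sv sg T" and RB: "\<And>u v. br (T u) (T v) = T (rL (T u) v + rR (T v) u)"
    using assms(3) unfolding relative_RB_def by blast+
  define Good where "Good k F \<longleftrightarrow> (\<forall>i. Vector_Spaces.linear sv sg (F i)) \<and> F 0 = T \<and> F 1 = T1 \<and>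
      (\<forall>i>Suc k. \<forall>z. F i z = 0) \<and> (\<forall>m\<le>Suc k. \<forall>x y. PhiT br rL rR F m x y = 0)" for k F
  have step: "\<exists>G. Vector_Spaces.linear sv sg G \<and> (\<forall>x y. PhiT br rL rR (F(Suc (Suc k) := G)) (Suc (Suc k)) x y = 0)"
    if GF: "Good k F" for k F
  proof -
    let ?N = "Suc (Suc k)"
    have FL: "\<And>i. Vector_Spaces.linear sv sg (F i)" and F0: "F 0 = T" and FN: "\<And>z. F ?N z = 0"
      and FP: "\<And>m x y. m < ?N \<Longrightarrow> PhiT br rL rR F m x y = 0"
      using GF unfolding Good_def by auto
    interpret lalg br rL rR F by (rule lalg_intro[OF la rp FL])
    define f where "f = (\<lambda>vs. PhiT br rL rR F ?N (vs!0) (vs!1))"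
    have cc: "cochain sg sv 2 f"
      unfolding cochain_def
    proof (intro allI impI)
      fix vs :: "'v list" and i :: nat assume a: "length vs = 2 \<and> i < 2"
      then obtain p q where vs: "vs = [p,q]" using len2 by blast
      from a have "i = 0 \<or> i = 1" by auto
      then show "Vector_Spaces.linear sv sg (\<lambda>v. f (vs[i := v]))"
        using Phi_lin[OF la rp FL] unfolding f_def vs by auto
    qed
    have cy: "cocycle sg sv br rL rR T 2 f"
      unfolding cocycle_def
    proof (intro conjI allI impI cc)
      fix vs :: "'v list" assume "length vs = Suc 2"
      then obtain x y z where vs: "vs = [x,y,z]" using len3 by (metis numeral_3_eq_3 numeral_2_eq_2)
      have B: "br (F 0 x) (PhiT br rL rR F ?N y z) - br (F 0 y) (PhiT br rL rR F ?N x z) - br (PhiT br rL rR F ?N x y) (F 0 z)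
     - F 0 (rR (PhiT br rL rR F ?N y z) x) + F 0 (rR (PhiT br rL rR F ?N x z) y) + F 0 (rL (PhiT br rL rR F ?N x y) z)
     + PhiT br rL rR F ?N x (circT rL rR F 0 y z) - PhiT br rL rR F ?N (circT rL rR F 0 x y) z
     - PhiT br rL rR F ?N y (circT rL rR F 0 x z) = 0"
        by (rule bianchi) (rule FP)
      show "dT br rL rR T 2 f vs = 0"
        using B unfolding vs dT2 f_def by (simp add: circT_def F0 algebra_simps)
    qed
    then obtain h where hc: "cochain sg sv 1 h" and hf: "\<And>vs. length vs = 2 \<Longrightarrow> f vs = dT br rL rR T 1 h vs"
      using assms(4) unfolding cohomology_vanishes_def coboundary_def by auto
    have hl: "Vector_Spaces.linear sv sg (\<lambda>v. h [v])"
      using hc[unfolded cochain_def, rule_format, of "[0]" 0] by simp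
    define G where "G = (\<lambda>v. - h [v])"
    have GL: "Vector_Spaces.linear sv sg G" unfolding G_def by (rule lin_neg[OF hl])
    have "PhiT br rL rR (F(?N := G)) ?N x y = 0" for x y
    proof -
      have "PhiT br rL rR (F(?N := G)) ?N x y = f [x,y] + br (F 0 x) (G y) + br (G x) (F 0 y)
         - F 0 (rL (G x) y + rR (G y) x) - G (rL (F 0 x) y + rR (F 0 y) x)"
        unfolding f_def by (simp add: PhiT_upd[OF lalg_axioms _ FN])
      also have "\<dots> = 0"
      proof -
        have Tadd: "additive T" by (simp add: additive_def lin_addD[OF TL])
        have hxy: "f [x,y] = dT br rL rR T 1 h [x,y]" using hf[of "[x,y]"] by simp
        show ?thesis unfolding hxy dT1
          by (simp add: G_def F0 minuss additive.minus[OF Tadd] additive.diff[OF Tadd] additive.add[OF Tadd] algebra_simps)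
      qed
      finally show ?thesis .
    qed
    then show ?thesis using GL by blast
  qed
  define c where "c = (\<lambda>F k. SOME G. Vector_Spaces.linear sv sg G \<and> (\<forall>x y. PhiT br rL rR (F(Suc (Suc k) := G)) (Suc (Suc k)) x y = 0))"
  define F0 where "F0 = (\<lambda>i::nat. if i = 0 then T else if i = 1 then T1 else (\<lambda>_. 0))"
  have good0: "Good 0 F0"
  proof -
    have FL: "\<And>i. Vector_Spaces.linear sv sg (F0 i)"
      unfolding F0_def using TL assms(5) lin_zero[OF VV VG] by auto
    interpret lalg br rL rR F0 by (rule lalg_intro[OF la rp FL])
    have c1: "dT br rL rR T 1 (\<lambda>vs. T1 (hd vs)) [x,y] = 0" for x y
      using assms(6) unfolding cocycle_def by auto
    have "PhiT br rL rR F0 m x y = 0" if "m \<le> 1" for m x y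
    proof -
      have "m = 0 \<or> m = 1" using that by auto
      then show ?thesis
      proof
        assume "m = 0" then show ?thesis by (simp add: PhiT_def phiT_def circT_def F0_def RB)
      next
        assume m1: "m = 1"
        have TA: "T (a + b) = T a + T b" for a b using lin_addD[OF TL] .
        show ?thesis using c1[of x y, unfolded dT1] unfolding m1 PhiT_def phiT_def circT_def
          by (simp add: F0_def dT1 TA algebra_simps)
      qed
    qed
    then show ?thesis unfolding Good_def using FL by (auto simp: F0_def)
  qed
  have goodk: "Good k (famr c F0 k)" for k
  proof (induction k)
    case 0 then show ?case using good0 by simp
  next
    case (Suc k)
    let ?F = "famr c F0 k"
    let ?N = "Suc (Suc k)"
    from step[OF Suc] have cF: "Vector_Spaces.linear sv sg (c ?F k) \<and> (\<forall>x y. PhiT br rL rR (?F(?N := c ?F k)) ?N x y = 0)"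
      unfolding c_def by (rule someI_ex)
    show ?case unfolding Good_def
    proof (intro conjI allI impI)
      fix i show "Vector_Spaces.linear sv sg (famr c F0 (Suc k) i)"
        using Suc cF unfolding Good_def by auto
    next
      show "famr c F0 (Suc k) 0 = T" "famr c F0 (Suc k) 1 = T1" using Suc unfolding Good_def by auto
    next
      fix i z assume "Suc (Suc k) < i" then show "famr c F0 (Suc k) i z = 0" using Suc unfolding Good_def by auto
    next
      fix m x y assume m: "m \<le> Suc (Suc k)"
      show "PhiT br rL rR (famr c F0 (Suc k)) m x y = 0"
      proof (cases "m = ?N")
        case True then show ?thesis using cF by simp
      next
        case False
        then have "PhiT br rL rR (famr c F0 (Suc k)) m x y = PhiT br rL rR ?F m x y"
          using m by (intro PhiT_cong) auto
        then show ?thesis using Suc False m unfolding Good_def by auto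
      qed
    qed
  qed
  define Tt where "Tt = (\<lambda>i. famr c F0 i i)"
  have TtF: "Tt i = famr c F0 m i" if "i \<le> m" for i m
    using famr_stable[of i i c F0 "m - i"] that unfolding Tt_def by simp
  have PT: "PhiT br rL rR Tt m x y = 0" for m x y
  proof -
    have "PhiT br rL rR Tt m x y = PhiT br rL rR (famr c F0 m) m x y" by (rule PhiT_cong) (rule TtF)
    then show ?thesis using goodk[of m] unfolding Good_def by auto
  qed
  have TtL: "Vector_Spaces.linear sv sg (Tt i)" for i
    using goodk[of i] unfolding Tt_def Good_def by auto
  have T0: "Tt 0 = T" using goodk[of 0] unfolding Tt_def Good_def by auto
  have T1': "Tt 1 = T1" using famr_stable[of 1 0 c F0 1] good0 unfolding Tt_def Good_def by simp
  have "formal_deformation sg br sv rL rR T Tt"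
    unfolding formal_deformation_def
  proof (intro conjI allI T0 TtL)
    fix n u v
    show "(\<Sum>i\<le>n. br (Tt i u) (Tt (n - i) v)) = (\<Sum>i\<le>n. Tt i (rL (Tt (n - i) u) v + rR (Tt (n - i) v) u))"
      using PT[of n u v] unfolding PhiT_def phiT_def circT_def by (simp add: sum_subtractf)
  qed
  then show ?thesis using T1' by blast
qed


end
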